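(* Let $p,q$ be positive integers, with notation as in the context, and let $s$ be the integer with $T_{e_s}=2^sT_1$. Let $T_c$ be a positive integer which is either $1$ or of the form $T_c=2^{l_c}T_1$ with $0\le l_c\le s+1$, and define $$e_0=\begin{cases}\max(e_p,e_q) & \text{if } T_c=1;\\ e_{s,g}+1 & \text{if } l_c=0,\ T_1\ne 1;\\ e_{s,g}+2l_c-1 & \text{if } 1\le l_c\le s+1.\end{cases}$$ Then for every integer $e>e_0$, every point $(x,y)$ lying on a cycle of length $T_c$ of the Cat map over $\mathbb{Z}_{2^e}$ satisfies $x\equiv 0\pmod 2$ and $y\equiv 0\pmod 2$.
   Context: Let $\mathbf{C}=\begin{bmatrix}1 & p\\ q & 1+pq\end{bmatrix}$. The Cat map over $\mathbb{Z}_{2^e}$ is the bijection $v\mapsto \mathbf{C}v\bmod 2^e$ of $\mathbb{Z}_{2^e}^2$; a point lies on a cycle of length $n$ if $n$ is the least positive integer with $\mathbf{C}^n v\equiv v\pmod{2^e}$. $T_e$ denotes the least period of the Cat map over $\mathbb{Z}_{2^e}$ (least $n\ge1$ with $\mathbf{C}^n\equiv I\pmod{2^e}$). Put $A=pq+2$, $B=\sqrt{A^2-4}$, $G_n=\left(\frac{A+B}{2}\right)^n+\left(\frac{A-B}{2}\right)^n$, $H_n=\frac{1}{B}\left(\left(\frac{A+B}{2}\right)^n-\left(\frac{A-B}{2}\right)^n\right)$ (integers). For a nonzero integer $m$ let $v_2(m)$ be the largest $x$ with $2^x\mid m$. Let $e_p=v_2(p)$, $e_q=v_2(q)$; $T_1=3$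 if $p,q$ are both odd, $T_1=2$ if exactly one of $p,q$ is odd, $T_1=1$ if both are even; $\hat h=-1$ if $e_p+e_q=0$ and $\hat h=\min(e_p,e_q)$ otherwise; $e_{s,h}=v_2(H_{T_1})$; $m_0=1$ if $\frac12 G_{T_1}\not\equiv 1\pmod 4$ and $m_0=0$ otherwise; $e_{s,g}=v_2\left(\frac12 G_{2^{m_0}T_1}-1\right)$; $x_0=e_{s,h}+m_0+\hat h-e_{s,g}$ if $e_{s,g}<e_{s,h}+m_0+\hat h$ and $x_0=0$ otherwise; and $e_s=e_{s,h}+m_0+\hat h+x_0$. The cases defining $e_0$ are read in order. *)

theory Defs
  imports "HOL-Computational_Algebra.Primes" "HOL-Number_Theory.Cong"
begin

definition v2 :: "int \<Rightarrow> nat" where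
  "v2 m = multiplicity (2::int) m"

text \<open>The Cat map v \<mapsto> C v with C = [[1,p],[q,1+pq]], acting on integer pairs
  (representatives of points of Z_{2^e}^2).\<close>
definition cat_map :: "int \<Rightarrow> int \<Rightarrow> int \<times> int \<Rightarrow> int \<times> int" where
  "cat_map p q v = (fst v + p * snd v, q * fst v + (1 + p * q) * snd v)"

text \<open>2x2 integer matrices as quadruples (a,b,c,d) = [[a,b],[c,d]].\<close>
definition mat_mult2 :: "int \<times> int \<times> int \<times> int \<Rightarrow> int \<times> int \<times> int \<times> int \<Rightarrow> int \<times> int \<times> int \<times> int" where
  "mat_mult2 M N = (case M of (a,b,c,d) \<Rightarrow> case N of (a',b',c',d') \<Rightarrow>
     (a*a' + b*c', a*b' + b*d', c*a' + d*c', c*b' + d*d'))"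

primrec cat_pow :: "int \<Rightarrow> int \<Rightarrow> nat \<Rightarrow> int \<times> int \<times> int \<times> int" where
  "cat_pow p q 0 = (1, 0, 0, 1)"
| "cat_pow p q (Suc n) = mat_mult2 (1, p, q, 1 + p * q) (cat_pow p q n)"

definition mat_cong_id :: "int \<times> int \<times> int \<times> int \<Rightarrow> int \<Rightarrow> bool" where
  "mat_cong_id M m = (case M of (a,b,c,d) \<Rightarrow>
     [a = 1] (mod m) \<and> [b = 0] (mod m) \<and> [c = 0] (mod m) \<and> [d = 1] (mod m))"

definition T :: "int \<Rightarrow> int \<Rightarrow> nat \<Rightarrow> nat" where
  "T p q e = (LEAST n. n \<ge> 1 \<and> mat_cong_id (cat_pow p q n) (2 ^ e))"

definition pair_cong :: "int \<times> int \<Rightarrow> int \<times> int \<Rightarrow> int \<Rightarrow> bool" where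
  "pair_cong v w m = ([fst v = fst w] (mod m) \<and> [snd v = snd w] (mod m))"

definition on_cycle :: "int \<Rightarrow> int \<Rightarrow> nat \<Rightarrow> nat \<Rightarrow> int \<times> int \<Rightarrow> bool" where
  "on_cycle p q e n v = (n \<ge> 1 \<and> pair_cong ((cat_map p q ^^ n) v) v (2 ^ e) \<and>
     (\<forall>k. 1 \<le> k \<and> k < n \<longrightarrow> \<not> pair_cong ((cat_map p q ^^ k) v) v (2 ^ e)))"

text \<open>G_n and H_n (Lucas sequences V_n(A,1), U_n(A,1) with A = pq+2),
  given by their integer recurrences.\<close>
fun Gseq :: "int \<Rightarrow> nat \<Rightarrow> int" where
  "Gseq A 0 = 2"
| "Gseq A (Suc 0) = A"
| "Gseq A (Suc (Suc n)) = A * Gseq A (Suc n) - Gseq A n"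

fun Hseq :: "int \<Rightarrow> nat \<Rightarrow> int" where
  "Hseq A 0 = 0"
| "Hseq A (Suc 0) = 1"
| "Hseq A (Suc (Suc n)) = A * Hseq A (Suc n) - Hseq A n"

definition G :: "int \<Rightarrow> int \<Rightarrow> nat \<Rightarrow> int" where "G p q n = Gseq (p * q + 2) n"
definition H :: "int \<Rightarrow> int \<Rightarrow> nat \<Rightarrow> int" where "H p q n = Hseq (p * q + 2) n"

definition T1 :: "int \<Rightarrow> int \<Rightarrow> nat" where
  "T1 p q = (if odd p \<and> odd q then 3 else if odd p \<or> odd q then 2 else 1)"

definition hhat :: "int \<Rightarrow> int \<Rightarrow> int" where
  "hhat p q = (if v2 p + v2 q = 0 then -1 else int (min (v2 p) (v2 q)))"

definition e_sh :: "int \<Rightarrow> int \<Rightarrow> int" where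
  "e_sh p q = int (v2 (H p q (T1 p q)))"

definition m0 :: "int \<Rightarrow> int \<Rightarrow> nat" where
  "m0 p q = (if \<not> [G p q (T1 p q) div 2 = 1] (mod 4) then 1 else 0)"

definition e_sg :: "int \<Rightarrow> int \<Rightarrow> int" where
  "e_sg p q = int (v2 (G p q (2 ^ m0 p q * T1 p q) div 2 - 1))"

definition x0 :: "int \<Rightarrow> int \<Rightarrow> int" where
  "x0 p q = (if e_sg p q < e_sh p q + int (m0 p q) + hhat p q
             then e_sh p q + int (m0 p q) + hhat p q - e_sg p q else 0)"

definition e_s :: "int \<Rightarrow> int \<Rightarrow> int" where
  "e_s p q = e_sh p q + int (m0 p q) + hhat p q + x0 p q"

text \<open>e_0, cases read in order; l_c is only used when T_c \<noteq> 1.\<close>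
definition e0 :: "int \<Rightarrow> int \<Rightarrow> nat \<Rightarrow> nat \<Rightarrow> int" where
  "e0 p q Tc lc = (if Tc = 1 then int (max (v2 p) (v2 q))
     else if lc = 0 \<and> T1 p q \<noteq> 1 then e_sg p q + 1
     else e_sg p q + 2 * int lc - 1)"

end

theory Submission
  imports Defs
begin

lemma mm[simp]: "mat_mult2 (a,b,c,d) (a',b',c',d') = (a*a' + b*c', a*b' + b*d', c*a' + d*c', c*b' + d*d')"
  by (simp add: mat_mult2_def)

lemma mm_assoc: "mat_mult2 (mat_mult2 X Y) Z = mat_mult2 X (mat_mult2 Y Z)"
proof -
  obtain a b c d where X: "X = (a,b,c,d)" by (cases X) auto
  obtain a1 b1 c1 d1 where Y: "Y = (a1,b1,c1,d1)" by (cases Y) auto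
  obtain a2 b2 c2 d2 where Z: "Z = (a2,b2,c2,d2)" by (cases Z) auto
  show ?thesis unfolding X Y Z by (simp add: algebra_simps)
qed

lemma cat_pow_add: "cat_pow p q (m + n) = mat_mult2 (cat_pow p q m) (cat_pow p q n)"
proof (induction m)
  case 0
  obtain a b c d where X: "cat_pow p q n = (a,b,c,d)" by (cases "cat_pow p q n") auto
  show ?case by (simp add: X)
next
  case (Suc m)
  then show ?case by (simp add: mm_assoc)
qed

lemma cat_pow_det: "cat_pow p q n = (a,b,c,d) \<Longrightarrow> a*d - b*c = 1"
proof (induction n arbitrary: a b c d)
  case 0 then show ?case by simp
next
  case (Suc n)
  obtain a1 b1 c1 d1 where X: "cat_pow p q n = (a1,b1,c1,d1)" by (cases "cat_pow p q n") auto
  have "a1*d1 - b1*c1 = 1" using Suc.IH X by blast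
  moreover have "a = a1 + p*c1" "b = b1 + p*d1" "c = q*a1 + (1+p*q)*c1" "d = q*b1 + (1+p*q)*d1"
    using Suc.prems X by auto
  ultimately show ?case by (simp add: algebra_simps)
qed

definition tr :: "int \<times> int \<times> int \<times> int \<Rightarrow> int" where
  "tr M = (case M of (a,b,c,d) \<Rightarrow> a + d)"

lemma tr_rec: "tr (cat_pow p q (Suc (Suc n))) = (p*q+2) * tr (cat_pow p q (Suc n)) - tr (cat_pow p q n)"
proof -
  obtain a b c d where X: "cat_pow p q n = (a,b,c,d)" by (cases "cat_pow p q n") auto
  show ?thesis by (simp add: X tr_def algebra_simps)
qed

lemma G_tr: "G p q n = tr (cat_pow p q n) \<and> G p q (Suc n) = tr (cat_pow p q (Suc n))"
proof (induction n)
  case 0 then show ?case by (simp add: G_def tr_def)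
next
  case (Suc n)
  then show ?case by (simp add: G_def tr_rec del: cat_pow.simps)
qed

lemma G_double: "G p q (2*m) = (G p q m)^2 - 2"
proof -
  obtain a b c d where X: "cat_pow p q m = (a,b,c,d)" by (cases "cat_pow p q m") auto
  have "a*d - b*c = 1" using cat_pow_det X by blast
  moreover have "cat_pow p q (2*m) = mat_mult2 (a,b,c,d) (a,b,c,d)"
    using cat_pow_add[of p q m m] X by (simp add: mult_2)
  ultimately show ?thesis using G_tr[of p q m] G_tr[of p q "2*m"] X
    by (simp add: tr_def power2_eq_square algebra_simps)
qed

lemma funpow_cat: "(cat_map p q ^^ n) v = (case cat_pow p q n of (a,b,c,d) \<Rightarrow> (a*fst v + b*snd v, c*fst v + d*snd v))"
proof (induction n)
  case 0 then show ?case by simp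
next
  case (Suc n)
  obtain a b c d where X: "cat_pow p q n = (a,b,c,d)" by (cases "cat_pow p q n") auto
  show ?case using Suc X by (simp add: cat_map_def algebra_simps)
qed


lemma pow2_dvd_odd: fixes z x :: int
  assumes "2^n dvd z * x" "odd x" shows "2^n dvd z"
proof -
  have "coprime ((2::int)^n) x" using assms(2) by simp
  then show ?thesis using assms(1) coprime_dvd_mult_left_iff by blast
qed

lemma mat_key:
  fixes a b c d x y :: int
  assumes "2^k dvd a" "2^k dvd b" "2^k dvd c" "2^k dvd d"
    and "2^e dvd a*x + b*y" "2^e dvd c*x + d*y" and "odd x \<or> odd y"
  shows "2^(e+k) dvd a*d - b*c"
proof -
  obtain a' where a: "a = 2^k * a'" using assms(1) by blast
  obtain b' where b: "b = 2^k * b'" using assms(2) by blast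
  obtain c' where c: "c = 2^k * c'" using assms(3) by blast
  obtain d' where d: "d = 2^k * d'" using assms(4) by blast
  have D: "a*d - b*c = 2^k * 2^k * (a'*d' - b'*c')" by (simp add: a b c d algebra_simps)
  show ?thesis
  proof (cases "e \<le> k")
    case True
    have "(2::int)^(e+k) dvd 2^k * 2^k"
      by (metis True add_le_mono1 le_imp_power_dvd power_add)
    then show ?thesis unfolding D by (simp add: dvd_mult2)
  next
    case False
    define f where "f = e - k"
    have ef: "(2::int)^e = 2^k * 2^f" using False by (simp add: f_def flip: power_add)
    have 1: "2^f dvd a'*x + b'*y"
    proof -
      have "2^k * 2^f dvd 2^k * (a'*x + b'*y)" using assms(5) ef by (simp add: a b algebra_simps)
      then show ?thesis by simp
    qed
    have 2: "2^f dvd c'*x + d'*y"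
    proof -
      have "2^k * 2^f dvd 2^k * (c'*x + d'*y)" using assms(6) ef by (simp add: c d algebra_simps)
      then show ?thesis by simp
    qed
    have X: "(a'*d' - b'*c') * x = d'*(a'*x + b'*y) - b'*(c'*x + d'*y)" by (simp add: algebra_simps)
    have Y: "(a'*d' - b'*c') * y = a'*(c'*x + d'*y) - c'*(a'*x + b'*y)" by (simp add: algebra_simps)
    have "2^f dvd (a'*d' - b'*c') * x" unfolding X using 1 2 by simp
    moreover have "2^f dvd (a'*d' - b'*c') * y" unfolding Y using 1 2 by simp
    ultimately have "2^f dvd (a'*d' - b'*c')" using assms(7) pow2_dvd_odd by blast
    then have "2^k * 2^k * 2^f dvd a*d - b*c" unfolding D by simp
    moreover have "(2::int)^(e+k) = 2^k * 2^k * 2^f" using ef by (simp add: power_add)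
    ultimately show ?thesis by simp
  qed
qed

lemma pow_div_base:
  assumes "cat_pow p q (T1 p q) = (a,b,c,d)"
  shows "2 dvd a - 1 \<and> 2 dvd b \<and> 2 dvd c \<and> 2 dvd d - 1"
proof -
  consider "odd p" "odd q" | "odd p \<or> odd q" "\<not>(odd p \<and> odd q)" | "even p" "even q" by blast
  then show ?thesis
  proof cases
    case 1
    then have "T1 p q = 3" by (simp add: T1_def)
    then have "cat_pow p q 3 = (a,b,c,d)" using assms by simp
    then show ?thesis using 1 by (auto simp: numeral_3_eq_3 algebra_simps)
  next
    case 2
    then have "T1 p q = 2" by (auto simp: T1_def)
    then have "cat_pow p q 2 = (a,b,c,d)" using assms by simp
    then show ?thesis using 2 by (auto simp: numeral_2_eq_2 algebra_simps)
  next
    case 3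
    then have "T1 p q = 1" by (auto simp: T1_def)
    then have "cat_pow p q 1 = (a,b,c,d)" using assms by (simp del: cat_pow.simps)
    moreover have "cat_pow p q 1 = (1, p, q, 1+p*q)" by simp
    ultimately have E: "(1, p, q, 1+p*q) = (a,b,c,d)" by metis
    then have "a = 1" "b = p" "c = q" "d = 1 + p*q" by (metis Pair_inject)+
    then show ?thesis using 3 by auto
  qed
qed


lemma pow_div:
  "cat_pow p q (2^l * T1 p q) = (a,b,c,d) \<Longrightarrow>
   2^(l+1) dvd a - 1 \<and> 2^(l+1) dvd b \<and> 2^(l+1) dvd c \<and> 2^(l+1) dvd d - 1"
proof (induction l arbitrary: a b c d)
  case 0 then show ?case using pow_div_base by simp
next
  case (Suc l)
  obtain a1 b1 c1 d1 where X: "cat_pow p q (2^l * T1 p q) = (a1,b1,c1,d1)"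
    by (cases "cat_pow p q (2^l * T1 p q)") auto
  from Suc.IH[OF X] obtain \<alpha> \<beta> \<gamma> \<delta> where
    A1: "a1 - 1 = 2^(l+1) * \<alpha>" and B1: "b1 = 2^(l+1) * \<beta>" and
    C1: "c1 = 2^(l+1) * \<gamma>" and D1: "d1 - 1 = 2^(l+1) * \<delta>"
    by (meson dvdE)
  have "2^Suc l * T1 p q = 2^l * T1 p q + 2^l * T1 p q" by simp
  then have "cat_pow p q (2^Suc l * T1 p q) = mat_mult2 (a1,b1,c1,d1) (a1,b1,c1,d1)"
    using cat_pow_add X by metis
  then have E: "a = a1*a1 + b1*c1" "b = a1*b1 + b1*d1" "c = c1*a1 + d1*c1" "d = c1*b1 + d1*d1"
    using Suc.prems by auto
  have a1: "a1 = 1 + 2^(l+1) * \<alpha>" using A1 by simp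
  have d1: "d1 = 1 + 2^(l+1) * \<delta>" using D1 by simp
  have P: "(2::int)^(l+1) * 2^(l+1) = 2^(Suc l + 1) * 2^l" by (simp add: power_add[symmetric])
  have "a - 1 = 2^(Suc l + 1) * (2^l * (\<alpha>*\<alpha> + \<beta>*\<gamma>) + \<alpha>)"
    unfolding E a1 B1 C1 by (simp add: algebra_simps P[symmetric]) 
  moreover have "b = 2^(Suc l + 1) * (2^l * (\<alpha>*\<beta> + \<beta>*\<delta>) + \<beta>)"
    unfolding E a1 d1 B1 by (simp add: algebra_simps P[symmetric])
  moreover have "c = 2^(Suc l + 1) * (2^l * (\<gamma>*\<alpha> + \<delta>*\<gamma>) + \<gamma>)"
    unfolding E a1 d1 C1 by (simp add: algebra_simps P[symmetric])
  moreover have "d - 1 = 2^(Suc l + 1) * (2^l * (\<gamma>*\<beta> + \<delta>*\<delta>) + \<delta>)"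
    unfolding E d1 B1 C1 by (simp add: algebra_simps P[symmetric])
  ultimately show ?case by (metis dvd_triv_left)
qed


definition gg :: "int \<Rightarrow> int \<Rightarrow> nat \<Rightarrow> int" where
  "gg p q j = G p q (2^j * T1 p q)"

lemma gg_suc: "gg p q (Suc j) - 2 = (gg p q j - 2) * (gg p q j + 2)"
proof -
  have "(2::nat)^Suc j * T1 p q = 2 * (2^j * T1 p q)" by simp
  then have "gg p q (Suc j) = (gg p q j)^2 - 2" unfolding gg_def using G_double by metis
  then show ?thesis by (simp add: power2_eq_square algebra_simps)
qed

lemma G123: "G p q 1 = p*q+2" "G p q 2 = (p*q+2)*(p*q+2) - 2"
  "G p q 3 = (p*q+2)*((p*q+2)*(p*q+2) - 2) - (p*q+2)"
  by (simp_all add: G_def numeral_3_eq_3 numeral_2_eq_2)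

lemma gg0: assumes "p > 0" "q > 0" shows "gg p q 0 > 2 \<and> (\<exists>w. gg p q 0 = 4*w + 2)"
proof -
  define A where "A = p*q+2"
  have "p*q > 0" using assms by simp
  then have A3: "A \<ge> 3" unfolding A_def by simp
  have "A*A \<ge> 3*3" using A3 by (intro mult_mono) auto
  then have AA: "A*A \<ge> 9" by simp
  consider "odd p" "odd q" | "odd p \<or> odd q" "\<not>(odd p \<and> odd q)" | "even p" "even q" by blast
  then show ?thesis
  proof cases
    case 1
    then have T: "T1 p q = 3" by (simp add: T1_def)
    have g: "gg p q 0 = A*(A*A-2) - A" by (simp add: gg_def T G123 A_def)
    have "odd A" using 1 by (simp add: A_def)
    then obtain k where k: "A = 2*k+1" by (meson oddE)
    have "odd ((2*k+1)*(2*k*k+2*k-1))" by simp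
    then obtain j where j: "(2*k+1)*(2*k*k+2*k-1) = 2*j+1" by (meson oddE)
    have "gg p q 0 = 2 * ((2*k+1)*(2*k*k+2*k-1))" unfolding g k by (simp add: algebra_simps)
    then have "gg p q 0 = 4*j+2" using j by simp
    moreover have "A*(A*A-3) \<ge> 3 * 6" using A3 AA by (intro mult_mono) auto
    moreover have "A*(A*A-2) - A = A*(A*A-3)" by (simp add: algebra_simps)
    ultimately show ?thesis using g by auto
  next
    case 2
    then have T: "T1 p q = 2" by (auto simp: T1_def)
    have g: "gg p q 0 = A*A-2" by (simp add: gg_def T G123 A_def)
    have "even A" using 2 by (auto simp add: A_def)
    then obtain k where k: "A = 2*k" by blast
    have e: "gg p q 0 = 4*(k*k-1) + 2" unfolding g k by (simp add: algebra_simps)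
    show ?thesis
    proof (intro conjI)
      show "gg p q 0 > 2" using g AA by simp
      show "\<exists>w. gg p q 0 = 4*w + 2" using e by blast
    qed
  next
    case 3
    then have T: "T1 p q = 1" by (auto simp: T1_def)
    have g: "gg p q 0 = A" by (simp add: gg_def T G_def A_def)
    obtain p' q' where "p = 2*p'" "q = 2*q'" using 3 by blast
    then have "gg p q 0 = 4*(p'*q') + 2" unfolding g A_def by (simp add: algebra_simps)
    then show ?thesis using g A3 by auto
  qed
qed


lemma gg_pos: assumes "p > 0" "q > 0" shows "gg p q j > 2"
proof (induction j)
  case 0 then show ?case using gg0[OF assms] by blast
next
  case (Suc j)
  then have "(gg p q j - 2) * (gg p q j + 2) > 0" by simp
  then show ?case using gg_suc[of p q j] by simp
qed

lemma gg_mod8: assumes "p > 0" "q > 0" shows "\<exists>w. gg p q (Suc j) = 8*w + 2"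
proof (induction j)
  case 0
  obtain w where w: "gg p q 0 = 4*w+2" using gg0[OF assms] by blast
  have "gg p q (Suc 0) - 2 = 8 * (2*w*(w+1))" using gg_suc[of p q 0] unfolding w by (simp add: algebra_simps)
  then have "gg p q (Suc 0) = 8 * (2*w*(w+1)) + 2" by simp
  then show ?case by blast
next
  case (Suc j)
  then obtain w where w: "gg p q (Suc j) = 8*w+2" by blast
  have "gg p q (Suc (Suc j)) - 2 = 8 * (w*(8*w+4))" using gg_suc[of p q "Suc j"] unfolding w by (simp add: algebra_simps)
  then have "gg p q (Suc (Suc j)) = 8 * (w*(8*w+4)) + 2" by simp
  then show ?case by blast
qed

lemma gg_mod4: assumes "p > 0" "q > 0" shows "\<exists>w. gg p q j = 4*w + 2"
proof (cases j)
  case 0 then show ?thesis using gg0[OF assms] by blast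
next
  case (Suc i)
  then obtain w where "gg p q j = 8*w+2" using gg_mod8[OF assms] by blast
  then have "gg p q j = 4*(2*w)+2" by simp
  then show ?thesis by blast
qed

lemma two_not_unit: "\<not> is_unit (2::int)" by simp

lemma v2_mult: fixes x y :: int assumes "x \<noteq> 0" "y \<noteq> 0" shows "v2 (x*y) = v2 x + v2 y"
  unfolding v2_def by (rule prime_elem_multiplicity_mult_distrib) (use assms in auto)

lemma v2_8w4: fixes w :: int shows "v2 (8*w+4) = 2"
  unfolding v2_def by (rule multiplicity_decomposeI[where x'="2*w+1"]) auto

lemma v2_2x: fixes x :: int assumes "x \<noteq> 0" shows "v2 (2*x) = Suc (v2 x)"
  unfolding v2_def using assms by (intro multiplicity_times_same) auto

lemma v2_ge: fixes x :: int assumes "2^n dvd x" "x \<noteq> 0" shows "n \<le> v2 x"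
  unfolding v2_def using assms by (intro multiplicity_geI) auto

lemma v2_4w8: fixes w :: int shows "v2 (4+8*w) = 2"
  using v2_8w4[of w] by (simp add: add.commute)

lemma v2_4x: fixes x :: int assumes "x \<noteq> 0" shows "v2 (4*x) = Suc (Suc (v2 x))"
  using v2_2x[of "2*x"] v2_2x[of x] assms by simp

definition uu :: "int \<Rightarrow> int \<Rightarrow> nat \<Rightarrow> nat" where
  "uu p q j = v2 (gg p q j - 2)"

lemma uu_suc: assumes "p > 0" "q > 0" shows "uu p q (Suc j) = uu p q j + v2 (gg p q j + 2)"
  unfolding uu_def gg_suc using gg_pos[OF assms, of j] by (intro v2_mult) auto

lemma uu_suc2: assumes "p > 0" "q > 0" shows "uu p q (Suc (Suc j)) = uu p q (Suc j) + 2"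
proof -
  obtain w where w: "gg p q (Suc j) = 8*w+2" using gg_mod8[OF assms] by blast
  have "gg p q (Suc j) + 2 = 8*w+4" using w by simp
  then show ?thesis using uu_suc[OF assms, of "Suc j"] v2_4w8 by simp
qed

lemma uu_l: assumes "p > 0" "q > 0" shows "uu p q (Suc l) = uu p q 1 + 2*l"
proof (induction l)
  case 0 then show ?case by simp
next
  case (Suc l) then show ?case using uu_suc2[OF assms, of l] by simp
qed

lemma m0_zero: assumes "p > 0" "q > 0" "m0 p q = 0" shows "uu p q 1 = uu p q 0 + 2"
proof -
  obtain w where w: "gg p q 0 = 4*w+2" using gg0[OF assms(1,2)] by blast
  have "G p q (T1 p q) = gg p q 0" by (simp add: gg_def)
  then have "[gg p q 0 div 2 = 1] (mod 4)" using assms(3) by (simp add: m0_def split: if_splits)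
  moreover have "gg p q 0 div 2 = 2*w+1" using w by simp
  ultimately have "[2*w+1 = 1] (mod 4)" by simp
  then have "4 dvd 2*w" by (simp add: cong_iff_dvd_diff)
  then have "2 dvd w" by auto
  then obtain v where v: "w = 2*v" by blast
  have "gg p q 0 + 2 = 8*v+4" using w v by simp
  then show ?thesis using uu_suc[OF assms(1,2), of 0] v2_4w8 by simp
qed

lemma e_sg_uu: assumes "p > 0" "q > 0" shows "e_sg p q + 1 = int (uu p q (m0 p q))"
proof -
  obtain w where w: "gg p q (m0 p q) = 4*w+2" using gg_mod4[OF assms] by blast
  have w0: "w \<noteq> 0" using gg_pos[OF assms, of "m0 p q"] w by auto
  have "G p q (2 ^ m0 p q * T1 p q) div 2 - 1 = 2*w" using w by (simp add: gg_def)
  then have "e_sg p q = int (v2 (2*w))" by (simp add: e_sg_def)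
  moreover have "uu p q (m0 p q) = v2 (2*(2*w))" unfolding uu_def w by simp
  ultimately show ?thesis using v2_2x[OF w0] v2_4x[OF w0] by simp
qed


lemma m0_cases: "m0 p q = 0 \<or> m0 p q = 1" by (simp add: m0_def)

theorem lemma8:
  fixes p q x y :: int and s lc Tc e :: nat
  assumes "p > 0" and "q > 0"
    and "T p q (nat (e_s p q)) = 2 ^ s * T1 p q"
    and "Tc = 1 \<or> (Tc = 2 ^ lc * T1 p q \<and> lc \<le> s + 1)"
    and "int e > e0 p q Tc lc"
    and "on_cycle p q e Tc (x, y)"
  shows "[x = 0] (mod 2) \<and> [y = 0] (mod 2)"
proof (rule ccontr)
  assume "\<not> ([x = 0] (mod 2) \<and> [y = 0] (mod 2))"
  then have odd: "odd x \<or> odd y" by (auto simp: cong_0_iff)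
  obtain a b c d where X: "cat_pow p q Tc = (a,b,c,d)" by (cases "cat_pow p q Tc") auto
  have pc: "pair_cong ((cat_map p q ^^ Tc) (x,y)) (x,y) (2^e)" using assms(6) by (simp add: on_cycle_def)
  then have "[a*x + b*y = x] (mod 2^e)" "[c*x + d*y = y] (mod 2^e)"
    by (simp_all add: funpow_cat X pair_cong_def)
  then have d1: "2^e dvd (a-1)*x + b*y" and d2: "2^e dvd c*x + (d-1)*y"
    by (simp_all add: cong_iff_dvd_diff algebra_simps)
  show False
  proof (cases "Tc = 1")
    case True
    have "cat_pow p q 1 = (1, p, q, 1+p*q)" by simp
    then have "a = 1" "b = p" "c = q" "d = 1 + p*q" using X True by (metis Pair_inject)+
    then have py: "2^e dvd p*y" and "2^e dvd q*x + p*q*y" using d1 d2 by (simp_all add: algebra_simps)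
    moreover have "2^e dvd p*q*y" using py by (metis dvd_mult2 mult.assoc mult.commute)
    ultimately have qx: "2^e dvd q*x" using dvd_add_left_iff by blast
    have ee: "int e > int (max (v2 p) (v2 q))" using assms(5) True by (simp add: e0_def)
    show False
    proof (cases "odd y")
      case True
      then have "2^e dvd p" using py pow2_dvd_odd by blast
      then have "e \<le> v2 p" using v2_ge assms(1) by simp
      then show False using ee by simp
    next
      case False
      then have "odd x" using odd by simp
      then have "2^e dvd q" using qx pow2_dvd_odd by blast
      then have "e \<le> v2 q" using v2_ge assms(2) by simp
      then show False using ee by simp
    qed
  next
    case False
    then have Tc: "Tc = 2 ^ lc * T1 p q" using assms(4) by blast
    have det: "a*d - b*c = 1" using cat_pow_det X by blast
    have tr: "gg p q lc = a + d" using G_tr[of p q Tc] X Tc by (simp add: gg_def tr_def)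
    have "2^(lc+1) dvd a - 1 \<and> 2^(lc+1) dvd b \<and> 2^(lc+1) dvd c \<and> 2^(lc+1) dvd d - 1"
      using pow_div X Tc by blast
    then have "2^(e+(lc+1)) dvd (a-1)*(d-1) - b*c"
      using mat_key[OF _ _ _ _ d1 d2 odd] by blast
    moreover have "(a-1)*(d-1) - b*c = -(gg p q lc - 2)" using det tr by (simp add: algebra_simps)
    ultimately have "2^(e+(lc+1)) dvd -(gg p q lc - 2)" by metis
    then have "2^(e+(lc+1)) dvd gg p q lc - 2" by (simp only: dvd_minus_iff)
    moreover have "gg p q lc - 2 \<noteq> 0" using gg_pos[OF assms(1,2), of lc] by simp
    ultimately have U: "e + lc + 1 \<le> uu p q lc" unfolding uu_def using v2_ge by fastforce
    have E: "e_sg p q + 1 = int (uu p q (m0 p q))" using e_sg_uu[OF assms(1,2)] .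
    show False
    proof (cases lc)
      case 0
      then have "T1 p q \<noteq> 1" using False Tc by auto
      then have "int e > e_sg p q + 1" using assms(5) False 0 by (simp add: e0_def)
      then have e1: "e > uu p q (m0 p q)" using E by simp
      show False using m0_cases[of p q]
      proof
        assume "m0 p q = 0" then show False using e1 U 0 by simp
      next
        assume "m0 p q = 1" then show False using e1 U 0 uu_suc[OF assms(1,2), of 0] by simp
      qed
    next
      case (Suc l)
      then have "int e > e_sg p q + 2 * int lc - 1" using assms(5) False by (simp add: e0_def)
      then have e1: "int e > int (uu p q (m0 p q)) + 2 * int lc - 2" using E by simp
      have U2: "e + lc + 1 \<le> uu p q 1 + 2*l" using U uu_l[OF assms(1,2), of l] Suc by simp
      show False using m0_cases[of p q]
      proof
        assume "m0 p q = 0" then show False using e1 U2 Suc m0_zero[OF assms(1,2)] by simp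
      next
        assume "m0 p q = 1" then show False using e1 U2 Suc by simp
      qed
    qed
  qed
qed

end
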